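(* Let $n\ge1$ and fix $\beta\in\partial\mathbb{D}$. On the manifold $\mathbb{D}^{n-1}$ of Verblunsky coefficients $(\alpha_0,\dots,\alpha_{n-2})$ with the Poisson bracket described in the context, let $P_n,Q_n,C_n,S_n$ be as in the context. Then for all $z,w$: \[ \{C_n(z),C_n(w)\}=0=\{S_n(z),S_n(w)\},\qquad \{C_n(z),S_n(w)\}=-i\,\frac{C_n(z)\,wS_n(w)-C_n(w)\,zS_n(z)}{z-w}, \] \[ \{P_n(z),P_n(w)\}=0=\{Q_n(z),Q_n(w)\}, \] \[ \{P_n(z),Q_n(w)\}=-\frac{i}{2}\Bigl[\bigl(P_n(z)Q_n(w)-P_n(w)Q_n(z)\bigr)\frac{z+w}{z-w}-Q_n(z)Q_n(w)+P_n(z)P_n(w)\Bigr]. \]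
   Context: Let $\rho_j=(1-|\alpha_j|^2)^{1/2}$. The Poisson bracket of (complex-valued) smooth functions of $\alpha_0,\dots,\alpha_{n-2}$ is $\{f,g\}=\sum_{j=0}^{n-2}i\rho_j^2\bigl(\frac{\partial f}{\partial\bar\alpha_j}\frac{\partial g}{\partial\alpha_j}-\frac{\partial f}{\partial\alpha_j}\frac{\partial g}{\partial\bar\alpha_j}\bigr)$ with Wirtinger derivatives; equivalently $\{\alpha_j,\alpha_k\}=\{\bar\alpha_j,\bar\alpha_k\}=0$, $\{\alpha_j,\bar\alpha_k\}=-i\rho_j^2\delta_{jk}$. Auxiliary variables $z,w$ are held fixed. The monic OPUC satisfy $\Phi_0=1$, $\Phi_{k+1}(z)=z\Phi_k(z)-\bar\alpha_k\Phi_k^*(z)$ with $\Phi_k^*(z)=z^k\overline{\Phi_k(1/\bar z)}$; $\Psi_k$ satisfies the same recursion with $\alpha_j$ replaced by $-\alpha_j$. Then $P_n(z)=z\Phi_{n-1}(z)-\bar\beta\Phi_{n-1}^*(z)$, $Q_n(z)=z\Psi_{n-1}(z)+\bar\beta\Psi_{n-1}^*(z)$, $C_n=\tfrac12(P_n+Q_n)$, $S_n=\tfrac12(P_n-Q_n)$. Identities with difference quotients are identities of polynomials in $z,w$. *)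

theory Defs
  imports "HOL-Analysis.Analysis" "HOL-Computational_Algebra.Polynomial"
begin

text \<open>Reversed polynomial: p^*(z) = z^k conj(p(1/conj z)), written coefficientwise
  (valid as a polynomial identity for deg p \<le> k).\<close>
definition opuc_star :: "nat \<Rightarrow> complex poly \<Rightarrow> complex poly" where
  "opuc_star k p = (\<Sum>m\<le>k. monom (cnj (coeff p (k - m))) m)"

fun Phi :: "(nat \<Rightarrow> complex) \<Rightarrow> nat \<Rightarrow> complex poly" where
  "Phi a 0 = 1"
| "Phi a (Suc k) = pCons 0 (Phi a k) - smult (cnj (a k)) (opuc_star k (Phi a k))"

definition Psi :: "(nat \<Rightarrow> complex) \<Rightarrow> nat \<Rightarrow> complex poly" where
  "Psi a k = Phi (\<lambda>j. - a j) k"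

definition Pn :: "nat \<Rightarrow> complex \<Rightarrow> (nat \<Rightarrow> complex) \<Rightarrow> complex poly" where
  "Pn n \<beta> a = pCons 0 (Phi a (n - 1)) - smult (cnj \<beta>) (opuc_star (n - 1) (Phi a (n - 1)))"

definition Qn :: "nat \<Rightarrow> complex \<Rightarrow> (nat \<Rightarrow> complex) \<Rightarrow> complex poly" where
  "Qn n \<beta> a = pCons 0 (Psi a (n - 1)) + smult (cnj \<beta>) (opuc_star (n - 1) (Psi a (n - 1)))"

definition Cn :: "nat \<Rightarrow> complex \<Rightarrow> (nat \<Rightarrow> complex) \<Rightarrow> complex poly" where
  "Cn n \<beta> a = smult (1/2) (Pn n \<beta> a + Qn n \<beta> a)"

definition Sn :: "nat \<Rightarrow> complex \<Rightarrow> (nat \<Rightarrow> complex) \<Rightarrow> complex poly" where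
  "Sn n \<beta> a = smult (1/2) (Pn n \<beta> a - Qn n \<beta> a)"

definition dRe :: "nat \<Rightarrow> ((nat \<Rightarrow> complex) \<Rightarrow> complex) \<Rightarrow> (nat \<Rightarrow> complex) \<Rightarrow> complex" where
  "dRe j f a = vector_derivative (\<lambda>t::real. f (a(j := a j + complex_of_real t))) (at 0)"

definition dIm :: "nat \<Rightarrow> ((nat \<Rightarrow> complex) \<Rightarrow> complex) \<Rightarrow> (nat \<Rightarrow> complex) \<Rightarrow> complex" where
  "dIm j f a = vector_derivative (\<lambda>t::real. f (a(j := a j + \<i> * complex_of_real t))) (at 0)"

definition wirt :: "nat \<Rightarrow> ((nat \<Rightarrow> complex) \<Rightarrow> complex) \<Rightarrow> (nat \<Rightarrow> complex) \<Rightarrow> complex" where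
  "wirt j f a = (dRe j f a - \<i> * dIm j f a) / 2"

definition wirt_bar :: "nat \<Rightarrow> ((nat \<Rightarrow> complex) \<Rightarrow> complex) \<Rightarrow> (nat \<Rightarrow> complex) \<Rightarrow> complex" where
  "wirt_bar j f a = (dRe j f a + \<i> * dIm j f a) / 2"

definition pbracket :: "nat \<Rightarrow> ((nat \<Rightarrow> complex) \<Rightarrow> complex) \<Rightarrow> ((nat \<Rightarrow> complex) \<Rightarrow> complex)
    \<Rightarrow> (nat \<Rightarrow> complex) \<Rightarrow> complex" where
  "pbracket n f g a = (\<Sum>j<n - 1. \<i> * complex_of_real (1 - (cmod (a j))\<^sup>2) *
      (wirt_bar j f a * wirt j g a - wirt j f a * wirt_bar j g a))"

end

theory Submission
  imports Defs
begin


definition mm :: "(nat \<Rightarrow> complex) \<Rightarrow> nat \<Rightarrow> complex \<Rightarrow> bool \<Rightarrow> bool \<Rightarrow> complex" where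
  "mm a k z p r = (if p then (if r then 1 else - a k * z) else (if r then - cnj (a k) else z))"

fun tm :: "(nat \<Rightarrow> complex) \<Rightarrow> nat \<Rightarrow> complex \<Rightarrow> bool \<Rightarrow> bool \<Rightarrow> complex" where
  "tm a 0 z p q = (if p = q then 1 else 0)"
| "tm a (Suc k) z p q = mm a k z p False * tm a k z False q + mm a k z p True * tm a k z True q"

fun Dm :: "nat \<Rightarrow> (nat \<Rightarrow> complex) \<Rightarrow> nat \<Rightarrow> complex \<Rightarrow> bool \<Rightarrow> bool \<Rightarrow> complex" where
  "Dm j a 0 z p q = 0"
| "Dm j a (Suc k) z p q = mm a k z p False * Dm j a k z False q + mm a k z p True * Dm j a k z True q
     + (if j = k then (if p then - z * tm a k z False q else 0) else 0)"

fun Dbm :: "nat \<Rightarrow> (nat \<Rightarrow> complex) \<Rightarrow> nat \<Rightarrow> complex \<Rightarrow> bool \<Rightarrow> bool \<Rightarrow> complex" where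
  "Dbm j a 0 z p q = 0"
| "Dbm j a (Suc k) z p q = mm a k z p False * Dbm j a k z False q + mm a k z p True * Dbm j a k z True q
     + (if j = k then (if p then 0 else - tm a k z True q) else 0)"

definition bt where
  "bt j a k z w p q p' q' = \<i> * (1 - a j * cnj (a j)) *
     (Dbm j a k z p q * Dm j a k w p' q' - Dm j a k z p q * Dbm j a k w p' q')"

definition BR where "BR a k z w p q p' q' = (\<Sum>j<k. bt j a k z w p q p' q')"

definition dl :: "bool \<Rightarrow> bool \<Rightarrow> complex" where
  "dl q q' = (if \<not> q \<and> q' then 1 else if q \<and> \<not> q' then -1 else 0)"

definition Fm :: "(bool \<Rightarrow> bool \<Rightarrow> complex) \<Rightarrow> (bool \<Rightarrow> bool \<Rightarrow> complex) \<Rightarrow> complex \<Rightarrow> complex \<Rightarrow> bool \<Rightarrow> bool \<Rightarrow> bool \<Rightarrow> bool \<Rightarrow> complex" where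
  "Fm Tz Tw z w p q p' q' =
     (if \<not> p \<and> p' then \<i> * w * (Tz False q * Tw True q' - Tz True q * Tw False q') else 0)
   + (if p \<and> \<not> p' then \<i> * z * (Tz True q * Tw False q' - Tz False q * Tw True q') else 0)
   - \<i> * dl q q' * (w * Tz p False * Tw p' True - z * Tz p True * Tw p' False)"

lemma Dm_zero: "k \<le> j \<Longrightarrow> Dm j a k z p q = 0"
  by (induction k arbitrary: p q) auto

lemma Dbm_zero: "k \<le> j \<Longrightarrow> Dbm j a k z p q = 0"
  by (induction k arbitrary: p q) auto

lemma bt_step:
  assumes "j < k"
  shows "bt j a (Suc k) z w p q p' q' =
     mm a k z p False * mm a k w p' False * bt j a k z w False q False q'
   + mm a k z p False * mm a k w p' True * bt j a k z w False q True q'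
   + mm a k z p True * mm a k w p' False * bt j a k z w True q False q'
   + mm a k z p True * mm a k w p' True * bt j a k z w True q True q'"
  using assms unfolding bt_def by (simp add: algebra_simps)

lemma BR_step:
  "BR a (Suc k) z w p q p' q' =
     mm a k z p False * mm a k w p' False * BR a k z w False q False q'
   + mm a k z p False * mm a k w p' True * BR a k z w False q True q'
   + mm a k z p True * mm a k w p' False * BR a k z w True q False q'
   + mm a k z p True * mm a k w p' True * BR a k z w True q True q'
   + bt k a (Suc k) z w p q p' q'"
proof -
  have "BR a (Suc k) z w p q p' q' = (\<Sum>j<k. bt j a (Suc k) z w p q p' q') + bt k a (Suc k) z w p q p' q'"
    unfolding BR_def by simp
  also have "(\<Sum>j<k. bt j a (Suc k) z w p q p' q') = (\<Sum>j<k.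
     mm a k z p False * mm a k w p' False * bt j a k z w False q False q'
   + mm a k z p False * mm a k w p' True * bt j a k z w False q True q'
   + mm a k z p True * mm a k w p' False * bt j a k z w True q False q'
   + mm a k z p True * mm a k w p' True * bt j a k z w True q True q')"
    by (rule sum.cong) (auto simp: bt_step)
  finally show ?thesis unfolding BR_def by (simp add: sum.distrib sum_distrib_left)
qed

lemma main_alg: "(z - w) * BR a k z w p q p' q' = Fm (tm a k z) (tm a k w) z w p q p' q'"
proof (induction k arbitrary: p q p' q')
  case 0
  then show ?case by (cases p; cases q; cases p'; cases q') (simp_all add: BR_def Fm_def dl_def)
next
  case (Suc k)
  have bk: "bt k a (Suc k) z w p q p' q' = \<i> * (1 - a k * cnj (a k)) *
     ((if p then 0 else - tm a k z True q) * (if p' then - w * tm a k w False q' else 0)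
    - (if p then - z * tm a k z False q else 0) * (if p' then 0 else - tm a k w True q'))"
    unfolding bt_def by (simp add: Dm_zero Dbm_zero)
  show ?case
    unfolding BR_step distrib_left bk
    apply (simp only: mult.left_commute[of "z - w"] Suc.IH)
    by (cases p; cases q; cases p'; cases q') (simp_all add: Fm_def dl_def mm_def algebra_simps)
qed



lemma tm_indep: "k \<le> j \<Longrightarrow> tm (a(j:=c)) k z p q = tm a k z p q"
  by (induction k arbitrary: p q) (auto simp: mm_def)

lemma Dm_upd: "Dm j (a(j:=c)) k z p q = Dm j a k z p q"
  by (induction k arbitrary: p q) (auto simp: mm_def Dm_zero tm_indep)

lemma Dbm_upd: "Dbm j (a(j:=c)) k z p q = Dbm j a k z p q"
  by (induction k arbitrary: p q) (auto simp: mm_def Dbm_zero tm_indep)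

lemma tm_affine: "tm (a(j:=c)) k z p q = tm a k z p q + (c - a j) * Dm j a k z p q + cnj (c - a j) * Dbm j a k z p q"
proof (induction k arbitrary: p q)
  case 0
  then show ?case by simp
next
  case (Suc k)
  show ?case
  proof (cases "j = k")
    case True
    have h: "\<And>p q. tm (a(j:=c)) k z p q = tm a k z p q" using True by (simp add: tm_indep)
    show ?thesis by (simp only: tm.simps h) (simp add: mm_def Dm_zero Dbm_zero True algebra_simps)
  next
    case False
    have h: "mm (a(j:=c)) k = mm a k" using False by (simp add: mm_def fun_eq_iff)
    show ?thesis by (simp only: tm.simps h Suc.IH) (simp add: mm_def False algebra_simps)
  qed
qed

lemma wirt_affine:
  assumes "\<And>x. f (\<alpha>(j:=x)) = A + (x - \<alpha> j) * B + cnj (x - \<alpha> j) * C"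
  shows "wirt j f \<alpha> = B" "wirt_bar j f \<alpha> = C"
proof -
  have e1: "(\<lambda>t::real. f (\<alpha>(j := \<alpha> j + complex_of_real t))) = (\<lambda>t. A + t *\<^sub>R (B + C))"
    by (rule ext) (simp add: assms scaleR_conv_of_real algebra_simps)
  have e2: "(\<lambda>t::real. f (\<alpha>(j := \<alpha> j + \<i> * complex_of_real t))) = (\<lambda>t. A + t *\<^sub>R (\<i> * B - \<i> * C))"
    by (rule ext) (simp add: assms scaleR_conv_of_real algebra_simps)
  have d: "vector_derivative (\<lambda>t::real. A + t *\<^sub>R K) (at 0) = K" for K :: complex
    by (rule vector_derivative_at) (auto intro!: derivative_eq_intros)
  have r: "dRe j f \<alpha> = B + C" "dIm j f \<alpha> = \<i> * B - \<i> * C"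
    unfolding dRe_def dIm_def e1 e2 d by simp_all
  show "wirt j f \<alpha> = B" "wirt_bar j f \<alpha> = C"
    unfolding wirt_def wirt_bar_def r by (simp_all add: algebra_simps)
qed



lemma coeff_opuc_star: "coeff (opuc_star k p) m = (if m \<le> k then cnj (coeff p (k - m)) else 0)"
proof -
  have "coeff (opuc_star k p) m = (\<Sum>i\<le>k. if i = m then cnj (coeff p (k - i)) else 0)"
    unfolding opuc_star_def coeff_sum coeff_monom by (rule sum.cong) auto
  also have "\<dots> = (if m \<le> k then cnj (coeff p (k - m)) else 0)"
    by (simp add: sum.delta'[unfolded atMost_iff] )
  finally show ?thesis .
qed

lemma degree_opuc_star: "degree (opuc_star k p) \<le> k"
  by (rule degree_le) (simp add: coeff_opuc_star)

lemma degree_Phi: "degree (Phi a k) \<le> k"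
proof (induction k)
  case 0 then show ?case by simp
next
  case (Suc k)
  have "degree (pCons 0 (Phi a k)) \<le> Suc k" using Suc by simp
  moreover have "degree (smult (cnj (a k)) (opuc_star k (Phi a k))) \<le> Suc k"
    using degree_opuc_star[of k "Phi a k"] degree_smult_le by (meson le_SucI order_trans)
  ultimately show ?case by (simp add: degree_diff_le)
qed

lemma opuc_Phi_Suc: "opuc_star (Suc k) (Phi a (Suc k)) = opuc_star k (Phi a k) - smult (a k) (pCons 0 (Phi a k))"
proof (rule poly_eqI)
  fix m
  have dg: "\<And>i. k < i \<Longrightarrow> coeff (Phi a k) i = 0" using degree_Phi[of a k] by (simp add: coeff_eq_0)
  show "coeff (opuc_star (Suc k) (Phi a (Suc k))) m = coeff (opuc_star k (Phi a k) - smult (a k) (pCons 0 (Phi a k))) m"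
  proof (cases "m \<le> Suc k")
    case True
    then show ?thesis
    proof (cases m)
      case (Suc m')
      show ?thesis
      proof (cases "m' < k")
        case True2: True
        then have "k - m' = Suc (k - Suc m')" by arith
        then show ?thesis using True True2 Suc by (auto simp: coeff_opuc_star coeff_pCons)
      next
        case False
        then have "m' = k" using True Suc by arith
        then show ?thesis using Suc by (auto simp: coeff_opuc_star coeff_pCons)
      qed
    qed (auto simp: coeff_opuc_star coeff_pCons Suc_diff_le split: nat.split)
  next
    case False
    then show ?thesis by (cases m) (auto simp: coeff_opuc_star coeff_pCons dg)
  qed
qed

lemma opuc_one: "opuc_star 0 1 = 1"
  by (rule poly_eqI) (simp add: coeff_opuc_star coeff_1)

lemma poly_Phi: "poly (Phi a k) z = tm a k z False False + tm a k z False True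
   \<and> poly (opuc_star k (Phi a k)) z = tm a k z True False + tm a k z True True"
proof (induction k)
  case 0 then show ?case by (simp add: opuc_one)
next
  case (Suc k)
  then show ?case
    unfolding opuc_Phi_Suc by (simp add: mm_def algebra_simps)
qed

lemma tm_neg: "tm (\<lambda>j. - a j) k z p q = (if p = q then 1 else -1) * tm a k z p q"
  by (induction k arbitrary: p q) (auto simp: mm_def)

lemma poly_Psi: "poly (Psi a k) z = tm a k z False False - tm a k z False True
   \<and> poly (opuc_star k (Psi a k)) z = tm a k z True True - tm a k z True False"
  using poly_Phi[of "\<lambda>j. - a j" k z] unfolding Psi_def tm_neg by simp

lemma tm_last: "tm (a(m:=b)) (Suc m) z p q = mm (a(m:=b)) m z p False * tm a m z False q + mm (a(m:=b)) m z p True * tm a m z True q"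
  by (simp add: tm_indep)

lemma poly_CSPQ:
  assumes "n \<ge> 1"
  shows "poly (Cn n \<beta> a) z = tm (a(n-1:=\<beta>)) n z False False"
    "poly (Sn n \<beta> a) z = tm (a(n-1:=\<beta>)) n z False True"
    "poly (Pn n \<beta> a) z = tm (a(n-1:=\<beta>)) n z False False + tm (a(n-1:=\<beta>)) n z False True"
    "poly (Qn n \<beta> a) z = tm (a(n-1:=\<beta>)) n z False False - tm (a(n-1:=\<beta>)) n z False True"
proof -
  obtain m where n: "n = Suc m" using assms by (cases n) auto
  have P: "poly (Pn n \<beta> a) z = tm (a(n-1:=\<beta>)) n z False False + tm (a(n-1:=\<beta>)) n z False True"
    unfolding n Pn_def tm_last using poly_Phi[of a m z] by (simp add: mm_def tm_indep algebra_simps)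
  have Q: "poly (Qn n \<beta> a) z = tm (a(n-1:=\<beta>)) n z False False - tm (a(n-1:=\<beta>)) n z False True"
    unfolding n Qn_def tm_last by (simp add: mm_def tm_indep poly_Psi algebra_simps)
  show "poly (Pn n \<beta> a) z = tm (a(n-1:=\<beta>)) n z False False + tm (a(n-1:=\<beta>)) n z False True" by (fact P)
  show "poly (Qn n \<beta> a) z = tm (a(n-1:=\<beta>)) n z False False - tm (a(n-1:=\<beta>)) n z False True" by (fact Q)
  show "poly (Cn n \<beta> a) z = tm (a(n-1:=\<beta>)) n z False False"
    unfolding Cn_def by (simp add: P Q field_simps)
  show "poly (Sn n \<beta> a) z = tm (a(n-1:=\<beta>)) n z False True"
    unfolding Sn_def by (simp add: P Q field_simps)
qed



lemma wirt_lin: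
  fixes \<alpha> :: "nat \<Rightarrow> complex" and \<beta> :: complex and m :: nat
  assumes "j \<noteq> m"
  defines "a' \<equiv> \<alpha>(m:=\<beta>)"
  shows "wirt j (\<lambda>a. c1 * tm (a(m:=\<beta>)) k z False False + c2 * tm (a(m:=\<beta>)) k z False True) \<alpha>
           = c1 * Dm j a' k z False False + c2 * Dm j a' k z False True"
    "wirt_bar j (\<lambda>a. c1 * tm (a(m:=\<beta>)) k z False False + c2 * tm (a(m:=\<beta>)) k z False True) \<alpha>
           = c1 * Dbm j a' k z False False + c2 * Dbm j a' k z False True"
proof -
  have e: "(\<alpha>(j:=x))(m:=\<beta>) = a'(j:=x)" for x using assms by (simp add: fun_upd_twist)
  have aj: "a' j = \<alpha> j" using assms by simp
  have *: "\<And>x. (\<lambda>a. c1 * tm (a(m:=\<beta>)) k z False False + c2 * tm (a(m:=\<beta>)) k z False True) (\<alpha>(j:=x))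
     = (c1 * tm a' k z False False + c2 * tm a' k z False True)
       + (x - \<alpha> j) * (c1 * Dm j a' k z False False + c2 * Dm j a' k z False True)
       + cnj (x - \<alpha> j) * (c1 * Dbm j a' k z False False + c2 * Dbm j a' k z False True)"
    unfolding e tm_affine aj by (simp add: algebra_simps)
  show "wirt j (\<lambda>a. c1 * tm (a(m:=\<beta>)) k z False False + c2 * tm (a(m:=\<beta>)) k z False True) \<alpha>
           = c1 * Dm j a' k z False False + c2 * Dm j a' k z False True"
    by (rule wirt_affine(1)[OF *])
  show "wirt_bar j (\<lambda>a. c1 * tm (a(m:=\<beta>)) k z False False + c2 * tm (a(m:=\<beta>)) k z False True) \<alpha>
           = c1 * Dbm j a' k z False False + c2 * Dbm j a' k z False True"
    by (rule wirt_affine(2)[OF *])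
qed

lemma pb_lin:
  fixes \<alpha> :: "nat \<Rightarrow> complex" and \<beta> :: complex and m :: nat
  assumes "cmod \<beta> = 1"
  defines "a' \<equiv> \<alpha>(m:=\<beta>)"
  shows "pbracket (Suc m) (\<lambda>a. c1 * tm (a(m:=\<beta>)) (Suc m) z False False + c2 * tm (a(m:=\<beta>)) (Suc m) z False True)
     (\<lambda>a. d1 * tm (a(m:=\<beta>)) (Suc m) w False False + d2 * tm (a(m:=\<beta>)) (Suc m) w False True) \<alpha>
   = c1 * d1 * BR a' (Suc m) z w False False False False + c1 * d2 * BR a' (Suc m) z w False False False True
   + c2 * d1 * BR a' (Suc m) z w False True False False + c2 * d2 * BR a' (Suc m) z w False True False True"
proof -
  let ?b = "\<lambda>j. c1 * d1 * bt j a' (Suc m) z w False False False False + c1 * d2 * bt j a' (Suc m) z w False False False True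
   + c2 * d1 * bt j a' (Suc m) z w False True False False + c2 * d2 * bt j a' (Suc m) z w False True False True"
  have bb: "\<beta> * cnj \<beta> = 1" using assms(1) complex_norm_square[of \<beta>] by simp
  have "pbracket (Suc m) (\<lambda>a. c1 * tm (a(m:=\<beta>)) (Suc m) z False False + c2 * tm (a(m:=\<beta>)) (Suc m) z False True)
     (\<lambda>a. d1 * tm (a(m:=\<beta>)) (Suc m) w False False + d2 * tm (a(m:=\<beta>)) (Suc m) w False True) \<alpha>
     = (\<Sum>j<m. ?b j)"
    unfolding pbracket_def diff_Suc_1
  proof (rule sum.cong)
    fix j assume "j \<in> {..<m}"
    then have jm: "j \<noteq> m" by simp
    have r: "complex_of_real (1 - (cmod (\<alpha> j))\<^sup>2) = 1 - a' j * cnj (a' j)"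
      using jm complex_norm_square[of "\<alpha> j"] by (simp add: a'_def)
    show "\<i> * complex_of_real (1 - (cmod (\<alpha> j))\<^sup>2) * (wirt_bar j (\<lambda>a. c1 * tm (a(m:=\<beta>)) (Suc m) z False False + c2 * tm (a(m:=\<beta>)) (Suc m) z False True) \<alpha> *
          wirt j (\<lambda>a. d1 * tm (a(m:=\<beta>)) (Suc m) w False False + d2 * tm (a(m:=\<beta>)) (Suc m) w False True) \<alpha> -
          wirt j (\<lambda>a. c1 * tm (a(m:=\<beta>)) (Suc m) z False False + c2 * tm (a(m:=\<beta>)) (Suc m) z False True) \<alpha> *
          wirt_bar j (\<lambda>a. d1 * tm (a(m:=\<beta>)) (Suc m) w False False + d2 * tm (a(m:=\<beta>)) (Suc m) w False True) \<alpha>) = ?b j"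
      unfolding wirt_lin[OF jm] r a'_def[symmetric] bt_def by (simp add: algebra_simps)
  qed simp
  also have "\<dots> = (\<Sum>j<Suc m. ?b j)"
    using bb by (simp add: bt_def a'_def)
  finally show ?thesis unfolding BR_def by (simp only: sum.distrib sum_distrib_left)
qed



lemma pbracket_self: "pbracket n f f a = 0"
  by (simp add: pbracket_def mult.commute)

lemma pq_alg:
  fixes z w C1 S1 C2 S2 :: complex
  assumes "z \<noteq> w"
  shows "1 * 1 * 0 + 1 * (-1) * ((- \<i> * (w * C1 * S2 - z * S1 * C2)) / (z - w)) + 1 * 1 * (- (- \<i> * (w * C1 * S2 - z * S1 * C2)) / (z - w)) + 1 * (-1) * 0
   = - (\<i> / 2) * (((C1 + S1) * (C2 - S2) - (C2 + S2) * (C1 - S1)) * (z + w) / (z - w) - (C1 - S1) * (C2 - S2) + (C1 + S1) * (C2 + S2))"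
proof -
  have d: "z - w \<noteq> 0" using assms by simp
  define u where "u = inverse (z - w)"
  have u: "(z - w) * u = 1" using d by (simp add: u_def)
  have h: "\<i> / 2 * 2 = \<i>" by simp
  show ?thesis unfolding divide_inverse u_def[symmetric] using u h by algebra
qed

theorem theorem5p4:
  fixes n :: nat and \<beta> z w :: complex and \<alpha> :: "nat \<Rightarrow> complex"
  assumes "n \<ge> 1" and "cmod \<beta> = 1" and "\<forall>j<n - 1. cmod (\<alpha> j) < 1"
  shows "pbracket n (\<lambda>a. poly (Cn n \<beta> a) z) (\<lambda>a. poly (Cn n \<beta> a) w) \<alpha> = 0
    \<and> pbracket n (\<lambda>a. poly (Sn n \<beta> a) z) (\<lambda>a. poly (Sn n \<beta> a) w) \<alpha> = 0
    \<and> (z \<noteq> w \<longrightarrow> pbracket n (\<lambda>a. poly (Cn n \<beta> a) z) (\<lambda>a. poly (Sn n \<beta> a) w) \<alpha>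
         = - \<i> * (poly (Cn n \<beta> \<alpha>) z * w * poly (Sn n \<beta> \<alpha>) w
                  - poly (Cn n \<beta> \<alpha>) w * z * poly (Sn n \<beta> \<alpha>) z) / (z - w))
    \<and> pbracket n (\<lambda>a. poly (Pn n \<beta> a) z) (\<lambda>a. poly (Pn n \<beta> a) w) \<alpha> = 0
    \<and> pbracket n (\<lambda>a. poly (Qn n \<beta> a) z) (\<lambda>a. poly (Qn n \<beta> a) w) \<alpha> = 0
    \<and> (z \<noteq> w \<longrightarrow> pbracket n (\<lambda>a. poly (Pn n \<beta> a) z) (\<lambda>a. poly (Qn n \<beta> a) w) \<alpha>
         = - (\<i> / 2) * ((poly (Pn n \<beta> \<alpha>) z * poly (Qn n \<beta> \<alpha>) w
                          - poly (Pn n \<beta> \<alpha>) w * poly (Qn n \<beta> \<alpha>) z) * (z + w) / (z - w)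
                        - poly (Qn n \<beta> \<alpha>) z * poly (Qn n \<beta> \<alpha>) w
                        + poly (Pn n \<beta> \<alpha>) z * poly (Pn n \<beta> \<alpha>) w))"
proof (cases "z = w")
  case True
  then show ?thesis by (simp add: pbracket_self)
next
  case zw: False
  obtain m where n: "n = Suc m" using assms(1) by (cases n) auto
  define a' where "a' = \<alpha>(m:=\<beta>)"
  have fC: "(\<lambda>a. poly (Cn n \<beta> a) x) = (\<lambda>a. 1 * tm (a(m:=\<beta>)) n x False False + 0 * tm (a(m:=\<beta>)) n x False True)" for x
    using poly_CSPQ(1)[OF assms(1)] n by simp
  have fS: "(\<lambda>a. poly (Sn n \<beta> a) x) = (\<lambda>a. 0 * tm (a(m:=\<beta>)) n x False False + 1 * tm (a(m:=\<beta>)) n x False True)" for x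
    using poly_CSPQ(2)[OF assms(1)] n by simp
  have fP: "(\<lambda>a. poly (Pn n \<beta> a) x) = (\<lambda>a. 1 * tm (a(m:=\<beta>)) n x False False + 1 * tm (a(m:=\<beta>)) n x False True)" for x
    using poly_CSPQ(3)[OF assms(1)] n by simp
  have fQ: "(\<lambda>a. poly (Qn n \<beta> a) x) = (\<lambda>a. 1 * tm (a(m:=\<beta>)) n x False False + (-1) * tm (a(m:=\<beta>)) n x False True)" for x
    using poly_CSPQ(4)[OF assms(1)] n by (simp del: tm.simps)
  have vC: "poly (Cn n \<beta> \<alpha>) x = tm a' n x False False" for x
    using poly_CSPQ(1)[OF assms(1)] n a'_def by simp
  have vS: "poly (Sn n \<beta> \<alpha>) x = tm a' n x False True" for x
    using poly_CSPQ(2)[OF assms(1)] n a'_def by simp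
  have vP: "poly (Pn n \<beta> \<alpha>) x = tm a' n x False False + tm a' n x False True" for x
    using poly_CSPQ(3)[OF assms(1)] n a'_def by simp
  have vQ: "poly (Qn n \<beta> \<alpha>) x = tm a' n x False False - tm a' n x False True" for x
    using poly_CSPQ(4)[OF assms(1)] n a'_def by simp
  note pb = pb_lin[OF assms(2), where \<alpha>=\<alpha> and m=m, folded a'_def, folded n]
  have zw': "z - w \<noteq> 0" using zw by simp
  define X where "X = - \<i> * (w * tm a' n z False False * tm a' n w False True - z * tm a' n z False True * tm a' n w False False)"
  have B1: "BR a' n z w False False False False = 0"
    using main_alg[of z w a' n False False False False] zw' by (simp add: Fm_def dl_def)
  have B4: "BR a' n z w False True False True = 0"
    using main_alg[of z w a' n False True False True] zw' by (simp add: Fm_def dl_def)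
  have B2: "BR a' n z w False False False True = X / (z - w)"
    using main_alg[of z w a' n False False False True] zw' by (simp add: Fm_def dl_def X_def field_simps)
  have B3: "BR a' n z w False True False False = - X / (z - w)"
    using main_alg[of z w a' n False True False False] zw' by (simp add: Fm_def dl_def X_def field_simps)
  have last: "pbracket n (\<lambda>a. poly (Pn n \<beta> a) z) (\<lambda>a. poly (Qn n \<beta> a) w) \<alpha>
         = - (\<i> / 2) * ((poly (Pn n \<beta> \<alpha>) z * poly (Qn n \<beta> \<alpha>) w
                          - poly (Pn n \<beta> \<alpha>) w * poly (Qn n \<beta> \<alpha>) z) * (z + w) / (z - w)
                        - poly (Qn n \<beta> \<alpha>) z * poly (Qn n \<beta> \<alpha>) w
                        + poly (Pn n \<beta> \<alpha>) z * poly (Pn n \<beta> \<alpha>) w)"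
    unfolding fP fQ pb vP vQ B1 B2 B3 B4 X_def by (rule pq_alg[OF zw])
  have first: "pbracket n (\<lambda>a. poly (Cn n \<beta> a) z) (\<lambda>a. poly (Cn n \<beta> a) w) \<alpha> = 0
    \<and> pbracket n (\<lambda>a. poly (Sn n \<beta> a) z) (\<lambda>a. poly (Sn n \<beta> a) w) \<alpha> = 0
    \<and> pbracket n (\<lambda>a. poly (Cn n \<beta> a) z) (\<lambda>a. poly (Sn n \<beta> a) w) \<alpha>
         = - \<i> * (poly (Cn n \<beta> \<alpha>) z * w * poly (Sn n \<beta> \<alpha>) w
                  - poly (Cn n \<beta> \<alpha>) w * z * poly (Sn n \<beta> \<alpha>) z) / (z - w)
    \<and> pbracket n (\<lambda>a. poly (Pn n \<beta> a) z) (\<lambda>a. poly (Pn n \<beta> a) w) \<alpha> = 0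
    \<and> pbracket n (\<lambda>a. poly (Qn n \<beta> a) z) (\<lambda>a. poly (Qn n \<beta> a) w) \<alpha> = 0"
    unfolding fC fS fP fQ pb vC vS vP vQ B1 B2 B3 B4 using zw'
    by (simp add: X_def field_simps del: tm.simps)
  show ?thesis using first last by blast
qed

end
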